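(* $\mathrm{CLC}_0$ has the unique normal form property: if $t_1$ and $t_2$ are in $\mathrm{CLC}_0$-normal form and $t_1=_{\mathrm{CLC}_0}t_2$, then $t_1\equiv t_2$.
   Context: Terms are built from variables and the constants $C,T,F,K,S$ by binary application (left-associative); $\equiv$ is syntactic identity. $\mathrm{CLC}_0$ is the term rewriting system with rules $C\,T\,x\,y\to x$; $C\,F\,x\,y\to y$; $C\,z\,x\,x\to x$; $K\,x\,y\to x$; $S\,x\,y\,z\to x\,z\,(y\,z)$, rewriting closed under contexts; $=_{\mathrm{CLC}_0}$ is its conversion relation and a normal form is a term containing no redex. *)

theory Defs
  imports Main
begin

datatype 'v trm = Var 'v | CC | TT | FF | KK | SS | App "'v trm" "'v trm" (infixl "\<cdot>" 100)

inductive root_step :: "'v trm \<Rightarrow> 'v trm \<Rightarrow> bool" where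
  condT: "root_step (CC \<cdot> TT \<cdot> x \<cdot> y) x"
| condF: "root_step (CC \<cdot> FF \<cdot> x \<cdot> y) y"
| condEq: "root_step (CC \<cdot> z \<cdot> x \<cdot> x) x"
| ruleK: "root_step (KK \<cdot> x \<cdot> y) x"
| ruleS: "root_step (SS \<cdot> x \<cdot> y \<cdot> z) (x \<cdot> z \<cdot> (y \<cdot> z))"

inductive step :: "'v trm \<Rightarrow> 'v trm \<Rightarrow> bool" where
  root: "root_step s t \<Longrightarrow> step s t"
| appL: "step s t \<Longrightarrow> step (s \<cdot> u) (t \<cdot> u)"
| appR: "step s t \<Longrightarrow> step (u \<cdot> s) (u \<cdot> t)"

definition conv :: "'v trm \<Rightarrow> 'v trm \<Rightarrow> bool" where
  "conv = (sup step step\<inverse>\<inverse>)\<^sup>*\<^sup>*"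

definition normal_form :: "'v trm \<Rightarrow> bool" where
  "normal_form t \<longleftrightarrow> \<not> (\<exists>u. step t u)"

end

theory Submission
  imports Defs
begin


lemma conv_refl: "conv t t" by (simp add: conv_def)

lemma step_conv: "step s t \<Longrightarrow> conv s t"
  unfolding conv_def by (rule r_into_rtranclp) simp

lemma conv_trans: "conv a b \<Longrightarrow> conv b c \<Longrightarrow> conv a c"
  unfolding conv_def by (rule rtranclp_trans)

lemma conv_sym: "conv s t \<Longrightarrow> conv t s"
  unfolding conv_def
proof (induction rule: rtranclp_induct)
  case base then show ?case by simp
next
  case (step y z)
  then have "(sup step step\<inverse>\<inverse>) z y" by auto
  then show ?case using step(3) by (rule converse_rtranclp_into_rtranclp)
qed

lemma conv_appL: "conv s t \<Longrightarrow> conv (s \<cdot> u) (t \<cdot> u)"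
  unfolding conv_def
proof (induction rule: rtranclp_induct)
  case base then show ?case by simp
next
  case (step y z)
  then have "(sup step step\<inverse>\<inverse>) (y \<cdot> u) (z \<cdot> u)" by (auto intro: step.appL)
  then show ?case using step(3) by (metis rtranclp.rtrancl_into_rtrancl)
qed

lemma conv_appR: "conv s t \<Longrightarrow> conv (u \<cdot> s) (u \<cdot> t)"
  unfolding conv_def
proof (induction rule: rtranclp_induct)
  case base then show ?case by simp
next
  case (step y z)
  then have "(sup step step\<inverse>\<inverse>) (u \<cdot> y) (u \<cdot> z)" by (auto intro: step.appR)
  then show ?case using step(3) by (metis rtranclp.rtrancl_into_rtrancl)
qed

lemma conv_app: "conv s s' \<Longrightarrow> conv t t' \<Longrightarrow> conv (s \<cdot> t) (s' \<cdot> t')"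
  by (meson conv_appL conv_appR conv_trans)

section \<open>Engeler-style model for consistency\<close>

datatype B = Atom nat | Arr "B list" B

definition ap :: "B set \<Rightarrow> B set \<Rightarrow> B set" where
  "ap X Y = {b. \<exists>\<beta>. set \<beta> \<subseteq> Y \<and> Arr \<beta> b \<in> X}"

definition Kset :: "B set" where
  "Kset = {Arr [b] (Arr \<gamma> b) | b \<gamma>. True}"

definition Sset :: "B set" where
  "Sset = {Arr [Arr \<delta> (Arr \<beta> b)] (Arr \<eta> (Arr \<zeta> b)) | \<delta> \<beta> b \<eta> \<zeta>.
     set \<delta> \<subseteq> set \<zeta> \<and> (\<forall>c\<in>set \<beta>. \<exists>\<gamma>. set \<gamma> \<subseteq> set \<zeta> \<and> Arr \<gamma> c \<in> set \<eta>)}"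

definition Cset :: "B set" where
  "Cset = {Arr [Atom 0] (Arr [b] (Arr [] b)) | b. True} \<union> {Arr [Atom 1] (Arr [] (Arr [b] b)) | b. True}
     \<union> {Arr [] (Arr [b] (Arr [b] b)) | b. True}"

fun ev :: "'v trm \<Rightarrow> B set" where
  "ev (Var v) = {}"
| "ev CC = Cset"
| "ev TT = {Atom 0}"
| "ev FF = {Atom 1}"
| "ev KK = Kset"
| "ev SS = Sset"
| "ev (s \<cdot> t) = ap (ev s) (ev t)"

lemma ap_K: "ap (ap Kset x) y = x"
proof -
  have "ap Kset x = {Arr \<gamma> b | b \<gamma>. b \<in> x}"
    unfolding ap_def Kset_def by auto
  then show ?thesis unfolding ap_def by (auto intro: exI[of _ "[]"])
qed

lemma ap_mem: "set \<beta> \<subseteq> Y \<Longrightarrow> Arr \<beta> b \<in> X \<Longrightarrow> b \<in> ap X Y"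
  unfolding ap_def by blast

lemma ap_iff: "b \<in> ap X Y \<longleftrightarrow> (\<exists>\<beta>. set \<beta> \<subseteq> Y \<and> Arr \<beta> b \<in> X)"
  by (simp add: ap_def)

lemma Cset_mem: "Arr \<omega> (Arr \<chi> (Arr \<zeta> b)) \<in> Cset \<longleftrightarrow>
   (\<omega> = [Atom 0] \<and> \<chi> = [b] \<and> \<zeta> = []) \<or> (\<omega> = [Atom 1] \<and> \<chi> = [] \<and> \<zeta> = [b]) \<or> (\<omega> = [] \<and> \<chi> = [b] \<and> \<zeta> = [b])"
  unfolding Cset_def by blast

lemma ap_C: "b \<in> ap (ap (ap Cset z) x) y \<longleftrightarrow> (Atom 0 \<in> z \<and> b \<in> x) \<or> (Atom 1 \<in> z \<and> b \<in> y) \<or> (b \<in> x \<and> b \<in> y)"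
proof -
  have "b \<in> ap (ap (ap Cset z) x) y \<longleftrightarrow>
     (\<exists>\<zeta> \<chi> \<omega>. set \<zeta> \<subseteq> y \<and> set \<chi> \<subseteq> x \<and> set \<omega> \<subseteq> z \<and> Arr \<omega> (Arr \<chi> (Arr \<zeta> b)) \<in> Cset)"
    unfolding ap_iff by blast
  also have "\<dots> \<longleftrightarrow> (Atom 0 \<in> z \<and> b \<in> x) \<or> (Atom 1 \<in> z \<and> b \<in> y) \<or> (b \<in> x \<and> b \<in> y)"
    unfolding Cset_mem
  proof
    assume "\<exists>\<zeta> \<chi> \<omega>. set \<zeta> \<subseteq> y \<and> set \<chi> \<subseteq> x \<and> set \<omega> \<subseteq> z \<and>
      (\<omega> = [Atom 0] \<and> \<chi> = [b] \<and> \<zeta> = [] \<or> \<omega> = [Atom 1] \<and> \<chi> = [] \<and> \<zeta> = [b] \<or> \<omega> = [] \<and> \<chi> = [b] \<and> \<zeta> = [b])"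
    then show "(Atom 0 \<in> z \<and> b \<in> x) \<or> (Atom 1 \<in> z \<and> b \<in> y) \<or> (b \<in> x \<and> b \<in> y)"
      by (elim exE conjE disjE) simp_all
  next
    assume "(Atom 0 \<in> z \<and> b \<in> x) \<or> (Atom 1 \<in> z \<and> b \<in> y) \<or> (b \<in> x \<and> b \<in> y)"
    then show "\<exists>\<zeta> \<chi> \<omega>. set \<zeta> \<subseteq> y \<and> set \<chi> \<subseteq> x \<and> set \<omega> \<subseteq> z \<and>
      (\<omega> = [Atom 0] \<and> \<chi> = [b] \<and> \<zeta> = [] \<or> \<omega> = [Atom 1] \<and> \<chi> = [] \<and> \<zeta> = [b] \<or> \<omega> = [] \<and> \<chi> = [b] \<and> \<zeta> = [b])"
    proof (elim conjE disjE)
      assume "Atom 0 \<in> z" "b \<in> x" then show ?thesis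
        by (intro exI[of _ "[]"] exI[of _ "[b]"] exI[of _ "[Atom 0]"]) simp
    next
      assume "Atom 1 \<in> z" "b \<in> y" then show ?thesis
        by (intro exI[of _ "[b]"] exI[of _ "[]"] exI[of _ "[Atom 1]"]) simp
    next
      assume "b \<in> x" "b \<in> y" then show ?thesis
        by (intro exI[of _ "[b]"] exI[of _ "[b]"] exI[of _ "[]"]) simp
    qed
  qed
  finally show ?thesis .
qed

lemma choice_list:
  "(\<forall>c\<in>set \<beta>. \<exists>\<gamma>. set \<gamma> \<subseteq> z \<and> Arr \<gamma> c \<in> y) \<Longrightarrow>
   \<exists>\<zeta> \<eta>. set \<zeta> \<subseteq> z \<and> set \<eta> \<subseteq> y \<and> (\<forall>c\<in>set \<beta>. \<exists>\<gamma>. set \<gamma> \<subseteq> set \<zeta> \<and> Arr \<gamma> c \<in> set \<eta>)"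
proof (induction \<beta>)
  case Nil then show ?case by (intro exI[of _ "[]"]) simp
next
  case (Cons a \<beta>)
  then obtain \<zeta> \<eta> where h: "set \<zeta> \<subseteq> z" "set \<eta> \<subseteq> y" "\<forall>c\<in>set \<beta>. \<exists>\<gamma>. set \<gamma> \<subseteq> set \<zeta> \<and> Arr \<gamma> c \<in> set \<eta>"
    by auto
  from Cons.prems obtain \<gamma> where g: "set \<gamma> \<subseteq> z" "Arr \<gamma> a \<in> y" by auto
  have A: "\<forall>c\<in>set (a # \<beta>). \<exists>\<gamma>'. set \<gamma>' \<subseteq> set (\<gamma> @ \<zeta>) \<and> Arr \<gamma>' c \<in> set (Arr \<gamma> a # \<eta>)"
  proof
      fix c assume c: "c \<in> set (a # \<beta>)"
      show "\<exists>\<gamma>'. set \<gamma>' \<subseteq> set (\<gamma> @ \<zeta>) \<and> Arr \<gamma>' c \<in> set (Arr \<gamma> a # \<eta>)"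
      proof (cases "c = a")
        case True then show ?thesis by (intro exI[of _ \<gamma>]) auto
      next
        case False
        then obtain \<gamma>' where "set \<gamma>' \<subseteq> set \<zeta>" "Arr \<gamma>' c \<in> set \<eta>" using c h(3) by auto
        then show ?thesis by (intro exI[of _ \<gamma>']) auto
      qed
    qed
  have "set (\<gamma> @ \<zeta>) \<subseteq> z" "set (Arr \<gamma> a # \<eta>) \<subseteq> y" using h g by auto
  then show ?case using A by blast
qed

lemma ap3: "b \<in> ap (ap (ap X x) y) z \<longleftrightarrow>
  (\<exists>\<zeta> \<eta> \<xi>. set \<zeta> \<subseteq> z \<and> set \<eta> \<subseteq> y \<and> set \<xi> \<subseteq> x \<and> Arr \<xi> (Arr \<eta> (Arr \<zeta> b)) \<in> X)"
  unfolding ap_iff by blast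

lemma Sset_mem: "Arr \<xi> (Arr \<eta> (Arr \<zeta> b)) \<in> Sset \<longleftrightarrow>
  (\<exists>\<delta> \<beta>. \<xi> = [Arr \<delta> (Arr \<beta> b)] \<and> set \<delta> \<subseteq> set \<zeta> \<and> (\<forall>c\<in>set \<beta>. \<exists>\<gamma>. set \<gamma> \<subseteq> set \<zeta> \<and> Arr \<gamma> c \<in> set \<eta>))"
  unfolding Sset_def by blast

lemma ap_S: "ap (ap (ap Sset x) y) z = ap (ap x z) (ap y z)"
proof (rule set_eqI, rule iffI)
  fix b assume "b \<in> ap (ap (ap Sset x) y) z"
  then obtain \<zeta> \<eta> \<xi> where h: "set \<zeta> \<subseteq> z" "set \<eta> \<subseteq> y" "set \<xi> \<subseteq> x" "Arr \<xi> (Arr \<eta> (Arr \<zeta> b)) \<in> Sset"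
    unfolding ap3 by blast
  from h(4) obtain \<delta> \<beta> where d: "\<xi> = [Arr \<delta> (Arr \<beta> b)]" "set \<delta> \<subseteq> set \<zeta>"
     "\<forall>c\<in>set \<beta>. \<exists>\<gamma>. set \<gamma> \<subseteq> set \<zeta> \<and> Arr \<gamma> c \<in> set \<eta>"
    unfolding Sset_mem by blast
  have "set \<beta> \<subseteq> ap y z"
  proof
    fix c assume "c \<in> set \<beta>"
    then obtain \<gamma> where "set \<gamma> \<subseteq> set \<zeta>" "Arr \<gamma> c \<in> set \<eta>" using d(3) by blast
    then show "c \<in> ap y z" using h(1,2) by (intro ap_mem[of \<gamma> z]) auto
  qed
  moreover have "Arr \<beta> b \<in> ap x z" using d h by (intro ap_mem[of \<delta> z]) auto
  ultimately show "b \<in> ap (ap x z) (ap y z)" by (rule ap_mem)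
next
  fix b assume "b \<in> ap (ap x z) (ap y z)"
  then obtain \<beta> \<delta> where h: "set \<beta> \<subseteq> ap y z" "set \<delta> \<subseteq> z" "Arr \<delta> (Arr \<beta> b) \<in> x"
    unfolding ap_iff by blast
  then have "\<forall>c\<in>set \<beta>. \<exists>\<gamma>. set \<gamma> \<subseteq> z \<and> Arr \<gamma> c \<in> y"
    by (simp add: ap_iff subset_iff)
  from choice_list[OF this] obtain \<zeta> \<eta> where c: "set \<zeta> \<subseteq> z" "set \<eta> \<subseteq> y"
     "\<forall>c\<in>set \<beta>. \<exists>\<gamma>. set \<gamma> \<subseteq> set \<zeta> \<and> Arr \<gamma> c \<in> set \<eta>" by blast
  have c3: "\<forall>c\<in>set \<beta>. \<exists>\<gamma>. set \<gamma> \<subseteq> set (\<delta> @ \<zeta>) \<and> Arr \<gamma> c \<in> set \<eta>"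
  proof
    fix c assume "c \<in> set \<beta>"
    then obtain \<gamma> where "set \<gamma> \<subseteq> set \<zeta>" "Arr \<gamma> c \<in> set \<eta>" using c(3) by blast
    then show "\<exists>\<gamma>. set \<gamma> \<subseteq> set (\<delta> @ \<zeta>) \<and> Arr \<gamma> c \<in> set \<eta>" by (intro exI[of _ \<gamma>]) auto
  qed
  have m: "Arr [Arr \<delta> (Arr \<beta> b)] (Arr \<eta> (Arr (\<delta> @ \<zeta>) b)) \<in> Sset"
    unfolding Sset_mem using c3 by simp
  have "Arr \<eta> (Arr (\<delta> @ \<zeta>) b) \<in> ap Sset x" using m h(3) by (intro ap_mem[of "[Arr \<delta> (Arr \<beta> b)]" x]) auto
  then have "Arr (\<delta> @ \<zeta>) b \<in> ap (ap Sset x) y" using c(2) by (rule ap_mem[rotated])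
  then show "b \<in> ap (ap (ap Sset x) y) z" using c(1) h(2) by (intro ap_mem[of "\<delta> @ \<zeta>" z]) auto
qed

lemma ev_root: "root_step s t \<Longrightarrow> ev s = ev t"
proof (induction rule: root_step.induct)
  case (condT x y) then show ?case by (auto simp: ap_C)
next
  case (condF x y) then show ?case by (auto simp: ap_C)
next
  case (condEq z x) then show ?case by (auto simp: ap_C)
next
  case (ruleK x y) then show ?case by (simp add: ap_K)
next
  case (ruleS x y z) then show ?case by (simp add: ap_S)
qed

lemma ev_step: "step s t \<Longrightarrow> ev s = ev t"
  by (induction rule: step.induct) (auto simp: ev_root)

lemma ev_conv: "conv s t \<Longrightarrow> ev s = ev t"
  unfolding conv_def
  by (induction rule: rtranclp_induct) (auto dest: ev_step)

lemma TF: "\<not> conv TT FF"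
  using ev_conv[of TT FF] by auto



inductive sroot :: "'v trm \<Rightarrow> 'v trm \<Rightarrow> bool" where
  sT: "sroot (CC \<cdot> TT \<cdot> x \<cdot> y) x"
| sF: "sroot (CC \<cdot> FF \<cdot> x \<cdot> y) y"
| sL: "conv x y \<Longrightarrow> \<not> conv z FF \<Longrightarrow> sroot (CC \<cdot> z \<cdot> x \<cdot> y) x"
| sR: "conv x y \<Longrightarrow> conv z FF \<Longrightarrow> sroot (CC \<cdot> z \<cdot> x \<cdot> y) y"
| sK: "sroot (KK \<cdot> x \<cdot> y) x"
| sS: "sroot (SS \<cdot> x \<cdot> y \<cdot> z) (x \<cdot> z \<cdot> (y \<cdot> z))"

inductive sstep :: "'v trm \<Rightarrow> 'v trm \<Rightarrow> bool" where
  sroot: "sroot s t \<Longrightarrow> sstep s t"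
| sappL: "sstep s t \<Longrightarrow> sstep (s \<cdot> u) (t \<cdot> u)"
| sappR: "sstep s t \<Longrightarrow> sstep (u \<cdot> s) (u \<cdot> t)"

inductive par :: "'v trm \<Rightarrow> 'v trm \<Rightarrow> bool" where
  pV: "par (Var v) (Var v)"
| pC: "par CC CC"
| pT: "par TT TT"
| pF: "par FF FF"
| pK: "par KK KK"
| pS: "par SS SS"
| pApp: "par s s' \<Longrightarrow> par t t' \<Longrightarrow> par (s \<cdot> t) (s' \<cdot> t')"
| pCT: "par x x' \<Longrightarrow> par (CC \<cdot> TT \<cdot> x \<cdot> y) x'"
| pCF: "par y y' \<Longrightarrow> par (CC \<cdot> FF \<cdot> x \<cdot> y) y'"
| pCL: "par x x' \<Longrightarrow> conv x y \<Longrightarrow> \<not> conv z FF \<Longrightarrow> par (CC \<cdot> z \<cdot> x \<cdot> y) x'"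
| pCR: "par y y' \<Longrightarrow> conv x y \<Longrightarrow> conv z FF \<Longrightarrow> par (CC \<cdot> z \<cdot> x \<cdot> y) y'"
| pKr: "par x x' \<Longrightarrow> par (KK \<cdot> x \<cdot> y) x'"
| pSr: "par x x' \<Longrightarrow> par y y' \<Longrightarrow> par z z' \<Longrightarrow> par (SS \<cdot> x \<cdot> y \<cdot> z) (x' \<cdot> z' \<cdot> (y' \<cdot> z'))"

lemma par_refl: "par t t"
  by (induction t) (auto intro: par.intros)

lemma root_conv: "root_step s t \<Longrightarrow> conv s t"
  by (rule step_conv) (rule step.root)

lemma par_conv: "par s t \<Longrightarrow> conv s t"
proof (induction rule: par.induct)
  case (pApp s s' t t') then show ?case by (blast intro: conv_app)
next
  case (pCT x x' y) then show ?case
    using conv_trans[OF root_conv[OF root_step.condT]] by blast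
next
  case (pCF y y' x) then show ?case
    using conv_trans[OF root_conv[OF root_step.condF]] by blast
next
  case (pCL x x' y z)
  have "conv (CC \<cdot> z \<cdot> x \<cdot> y) (CC \<cdot> z \<cdot> x \<cdot> x)" using conv_appR[OF conv_sym[OF pCL(2)]] by blast
  then show ?case using pCL conv_trans[OF _ root_conv[OF root_step.condEq]] conv_trans by blast
next
  case (pCR y y' x z)
  have "conv (CC \<cdot> z \<cdot> x \<cdot> y) (CC \<cdot> z \<cdot> y \<cdot> y)" using conv_appL[OF conv_appR[OF pCR(2)]] by blast
  then show ?case using pCR conv_trans[OF _ root_conv[OF root_step.condEq]] conv_trans by blast
next
  case (pKr x x' y) then show ?case
    using conv_trans[OF root_conv[OF root_step.ruleK]] by blast
next
  case (pSr x x' y y' z z')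
  have "conv (x \<cdot> z \<cdot> (y \<cdot> z)) (x' \<cdot> z' \<cdot> (y' \<cdot> z'))" using pSr by (blast intro: conv_app)
  then show ?case using conv_trans[OF root_conv[OF root_step.ruleS]] by blast
qed (auto intro: conv_refl)

fun cd :: "'v trm \<Rightarrow> 'v trm" where
  "cd (CC \<cdot> z \<cdot> x \<cdot> y) = (if z = TT then cd x else if z = FF then cd y
      else if conv x y \<and> \<not> conv z FF then cd x else if conv x y then cd y
      else CC \<cdot> cd z \<cdot> cd x \<cdot> cd y)"
| "cd (KK \<cdot> x \<cdot> y) = cd x"
| "cd (SS \<cdot> x \<cdot> y \<cdot> z) = cd x \<cdot> cd z \<cdot> (cd y \<cdot> cd z)"
| "cd (s \<cdot> t) = cd s \<cdot> cd t"
| "cd t = t"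

lemma cd_app: "(\<forall>z x. s \<noteq> CC \<cdot> z \<cdot> x) \<Longrightarrow> (\<forall>x. s \<noteq> KK \<cdot> x) \<Longrightarrow> (\<forall>x y. s \<noteq> SS \<cdot> x \<cdot> y) \<Longrightarrow>
  cd (s \<cdot> u) = cd s \<cdot> cd u"
  by (cases "s \<cdot> u" rule: cd.cases) auto

lemma par_CC: "par CC c \<Longrightarrow> c = CC" by (erule par.cases) auto
lemma par_TT: "par TT c \<Longrightarrow> c = TT" by (erule par.cases) auto
lemma par_FF: "par FF c \<Longrightarrow> c = FF" by (erule par.cases) auto
lemma par_KK: "par KK c \<Longrightarrow> c = KK" by (erule par.cases) auto
lemma par_SS: "par SS c \<Longrightarrow> c = SS" by (erule par.cases) auto
lemma par_C1: "par (CC \<cdot> z) c \<Longrightarrow> \<exists>z'. c = CC \<cdot> z' \<and> par z z'"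
  by (erule par.cases) (auto dest: par_CC)
lemma par_C2: "par (CC \<cdot> z \<cdot> x) c \<Longrightarrow> \<exists>z' x'. c = CC \<cdot> z' \<cdot> x' \<and> par z z' \<and> par x x'"
  by (erule par.cases) (auto dest: par_C1)
lemma par_K1: "par (KK \<cdot> x) c \<Longrightarrow> \<exists>x'. c = KK \<cdot> x' \<and> par x x'"
  by (erule par.cases) (auto dest: par_KK)
lemma par_S1: "par (SS \<cdot> x) c \<Longrightarrow> \<exists>x'. c = SS \<cdot> x' \<and> par x x'"
  by (erule par.cases) (auto dest: par_SS)
lemma par_S2: "par (SS \<cdot> x \<cdot> y) c \<Longrightarrow> \<exists>x' y'. c = SS \<cdot> x' \<cdot> y' \<and> par x x' \<and> par y y'"
  by (erule par.cases) (auto dest: par_S1)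

lemma conv_par_both: "conv x y \<Longrightarrow> par x x' \<Longrightarrow> par y y' \<Longrightarrow> conv x' y'"
  by (meson conv_sym conv_trans par_conv)

lemma triangle: "par t a \<Longrightarrow> par a (cd t)"
proof (induction rule: par.induct)
  case (pApp s s' u u')
  consider (C) z x where "s = CC \<cdot> z \<cdot> x" | (K) x where "s = KK \<cdot> x" | (S) x y where "s = SS \<cdot> x \<cdot> y"
    | (O) "(\<forall>z x. s \<noteq> CC \<cdot> z \<cdot> x)" "(\<forall>x. s \<noteq> KK \<cdot> x)" "(\<forall>x y. s \<noteq> SS \<cdot> x \<cdot> y)"
    by blast
  then show ?case
  proof cases
    case (C z x)
    from pApp(1) C obtain z' x' where s': "s' = CC \<cdot> z' \<cdot> x'" "par z z'" "par x x'"
      using par_C2 by blast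
    have "cd s = CC \<cdot> cd z \<cdot> cd x" using C by simp
    with pApp(3) s' have ih: "par z' (cd z)" "par x' (cd x)" by (auto dest: par_C2)
    show ?thesis
    proof -
      { assume "z = TT"
        then have "z' = TT" using s' par_TT by blast
        then have ?thesis using C s' ih \<open>z = TT\<close> by (auto intro: par.intros) }
      moreover
      { assume "z = FF"
        then have "z' = FF" using s' par_FF by blast
        then have ?thesis using C s' ih pApp(4) \<open>z = FF\<close> by (auto intro: par.intros) }
      moreover
      { assume h: "z \<noteq> TT" "z \<noteq> FF" "conv x u" "\<not> conv z FF"
        have "conv x' u'" using conv_par_both h(3) s'(3) pApp(2) by blast
        moreover have "\<not> conv z' FF" using h(4) s'(2) by (meson conv_trans par_conv)
        ultimately have ?thesis using C s' ih h by (auto intro: par.intros) }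
      moreover
      { assume h: "z \<noteq> TT" "z \<noteq> FF" "conv x u" "conv z FF"
        have "conv x' u'" using conv_par_both h(3) s'(3) pApp(2) by blast
        moreover have "conv z' FF" using h(4) s'(2) by (meson conv_sym conv_trans par_conv)
        ultimately have ?thesis using C s' ih h pApp(4) by (auto intro: par.intros) }
      moreover
      { assume h: "z \<noteq> TT" "z \<noteq> FF" "\<not> conv x u"
        then have ?thesis using C s' ih pApp(4) by (auto intro: par.intros) }
      ultimately show ?thesis by blast
    qed
  next
    case (K x)
    from pApp(1) K obtain x' where s': "s' = KK \<cdot> x'" "par x x'" using par_K1 by blast
    have "cd s = KK \<cdot> cd x" using K by simp
    with pApp(3) s' have "par x' (cd x)" by (auto dest: par_K1)
    then show ?thesis using K s' by (auto intro: par.intros)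
  next
    case (S x y)
    from pApp(1) S obtain x' y' where s': "s' = SS \<cdot> x' \<cdot> y'" "par x x'" "par y y'" using par_S2 by blast
    have "cd s = SS \<cdot> cd x \<cdot> cd y" using S by simp
    with pApp(3) s' have "par x' (cd x)" "par y' (cd y)" by (auto dest: par_S2)
    then show ?thesis using S s' pApp(4) by (auto intro: par.intros)
  next
    case O
    then show ?thesis using pApp(3,4) by (simp add: cd_app par.pApp)
  qed
next
  case (pCL x x' y z)
  then show ?case
    using TF by (auto simp: conv_refl)
next
  case (pCR y y' x z)
  then show ?case
    using TF by (auto simp: conv_refl)
qed (auto intro: par.intros)

lemma par_diamond: "par t a \<Longrightarrow> par t b \<Longrightarrow> \<exists>c. par a c \<and> par b c"
  using triangle by blast

lemma strip: "par\<^sup>*\<^sup>* t b \<Longrightarrow> par t a \<Longrightarrow> \<exists>c. par\<^sup>*\<^sup>* a c \<and> par b c"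
proof (induction arbitrary: a rule: rtranclp_induct)
  case base then show ?case by auto
next
  case (step y z)
  from step.IH[OF step.prems] obtain c where c: "par\<^sup>*\<^sup>* a c" "par y c" by blast
  from par_diamond[OF c(2) step.hyps(2)] obtain d where "par c d" "par z d" by blast
  then show ?case using c(1) by (meson rtranclp.rtrancl_into_rtrancl)
qed

lemma par_CR: "par\<^sup>*\<^sup>* t a \<Longrightarrow> par\<^sup>*\<^sup>* t b \<Longrightarrow> \<exists>c. par\<^sup>*\<^sup>* a c \<and> par\<^sup>*\<^sup>* b c"
proof (induction arbitrary: b rule: rtranclp_induct)
  case base then show ?case by auto
next
  case (step y z)
  from step.IH[OF step.prems] obtain c where c: "par\<^sup>*\<^sup>* y c" "par\<^sup>*\<^sup>* b c" by blast
  from strip[OF c(1) step.hyps(2)] obtain d where "par\<^sup>*\<^sup>* z d" "par c d" by blast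
  then show ?case using c(2) by (meson rtranclp.rtrancl_into_rtrancl)
qed

lemma sstep_par: "sstep s t \<Longrightarrow> par s t"
proof (induction rule: sstep.induct)
  case (sroot s t) then show ?case
    by (cases rule: sroot.cases) (auto intro: par.intros par_refl)
qed (auto intro: par.intros par_refl)

lemma sstar_appL: "sstep\<^sup>*\<^sup>* s t \<Longrightarrow> sstep\<^sup>*\<^sup>* (s \<cdot> u) (t \<cdot> u)"
  by (induction rule: rtranclp_induct) (auto intro: sstep.sappL rtranclp.rtrancl_into_rtrancl)
lemma sstar_appR: "sstep\<^sup>*\<^sup>* s t \<Longrightarrow> sstep\<^sup>*\<^sup>* (u \<cdot> s) (u \<cdot> t)"
  by (induction rule: rtranclp_induct) (auto intro: sstep.sappR rtranclp.rtrancl_into_rtrancl)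
lemma sstar_app: "sstep\<^sup>*\<^sup>* s s' \<Longrightarrow> sstep\<^sup>*\<^sup>* t t' \<Longrightarrow> sstep\<^sup>*\<^sup>* (s \<cdot> t) (s' \<cdot> t')"
  by (meson rtranclp_trans sstar_appL sstar_appR)

lemma sroot_star: "sroot s t \<Longrightarrow> sstep\<^sup>*\<^sup>* t u \<Longrightarrow> sstep\<^sup>*\<^sup>* s u"
  by (meson converse_rtranclp_into_rtranclp sstep.sroot)

lemma par_sstar: "par s t \<Longrightarrow> sstep\<^sup>*\<^sup>* s t"
proof (induction rule: par.induct)
  case (pApp s s' t t') then show ?case by (blast intro: sstar_app)
next
  case (pCT x x' y) then show ?case by (meson sroot_star sroot.sT)
next
  case (pCF y y' x) then show ?case by (meson sroot_star sroot.sF)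
next
  case (pCL x x' y z) then show ?case by (meson sroot_star sroot.sL)
next
  case (pCR y y' x z) then show ?case by (meson sroot_star sroot.sR)
next
  case (pKr x x' y) then show ?case by (meson sroot_star sroot.sK)
next
  case (pSr x x' y y' z z') then show ?case by (meson sroot_star sroot.sS sstar_app)
qed auto

lemma sstar_parstar: "sstep\<^sup>*\<^sup>* s t \<Longrightarrow> par\<^sup>*\<^sup>* s t"
  by (induction rule: rtranclp_induct) (auto intro: sstep_par rtranclp.rtrancl_into_rtrancl)

lemma parstar_sstar: "par\<^sup>*\<^sup>* s t \<Longrightarrow> sstep\<^sup>*\<^sup>* s t"
  by (induction rule: rtranclp_induct) (auto dest: par_sstar intro: rtranclp_trans)

lemma sstep_CR: "sstep\<^sup>*\<^sup>* t a \<Longrightarrow> sstep\<^sup>*\<^sup>* t b \<Longrightarrow> \<exists>c. sstep\<^sup>*\<^sup>* a c \<and> sstep\<^sup>*\<^sup>* b c"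
  by (meson par_CR parstar_sstar sstar_parstar)

lemma sroot_eq: "sroot (CC \<cdot> z \<cdot> x \<cdot> x) x"
  by (cases "conv z FF") (auto intro: sroot.intros conv_refl)

lemma step_sstep: "step s t \<Longrightarrow> sstep s t"
proof (induction rule: step.induct)
  case (root s t) then show ?case
    by (cases rule: root_step.cases) (auto intro: sstep.sroot sroot.intros sroot_eq)
qed (auto intro: sstep.intros)

lemma conv_join: "conv a b \<Longrightarrow> \<exists>c. sstep\<^sup>*\<^sup>* a c \<and> sstep\<^sup>*\<^sup>* b c"
  unfolding conv_def
proof (induction rule: rtranclp_induct)
  case base then show ?case by auto
next
  case (step y z)
  from step.IH obtain c where c: "sstep\<^sup>*\<^sup>* a c" "sstep\<^sup>*\<^sup>* y c" by blast
  from step.hyps(2) show ?case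
  proof
    assume "step y z"
    then have "sstep\<^sup>*\<^sup>* y z" by (auto dest: step_sstep)
    from sstep_CR[OF c(2) this] obtain d where "sstep\<^sup>*\<^sup>* c d" "sstep\<^sup>*\<^sup>* z d" by blast
    then show ?thesis using c(1) by (meson rtranclp_trans)
  next
    assume "step\<inverse>\<inverse> y z"
    then have "sstep z y" by (auto dest: step_sstep)
    then show ?thesis using c by (meson converse_rtranclp_into_rtranclp)
  qed
qed



lemma nf_app: "normal_form (s \<cdot> t) \<Longrightarrow> normal_form s \<and> normal_form t"
  unfolding normal_form_def by (blast intro: step.appL step.appR)

lemma nf_root: "normal_form s \<Longrightarrow> root_step s t \<Longrightarrow> False"
  unfolding normal_form_def by (blast intro: step.root)

lemma sroot_nf:
  fixes s :: "'v trm"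
  assumes "sroot s t" "normal_form s"
    "\<forall>x y :: 'v trm. size x + size y < size s \<longrightarrow> normal_form x \<longrightarrow> normal_form y \<longrightarrow> conv x y \<longrightarrow> x = y"
  shows False
  using assms
proof (induction rule: sroot.induct)
  case (sT x y) then show ?case using nf_root root_step.condT by blast
next
  case (sF x y) then show ?case using nf_root root_step.condF by blast
next
  case (sL x y z)
  have nx: "normal_form x" "normal_form y" using sL.prems(1) nf_app by blast+
  have "size x + size y < size (CC \<cdot> z \<cdot> x \<cdot> y)" by simp
  then have "x = y" using sL.prems(2) nx sL.hyps(1) by blast
  then show ?case using sL.prems(1) nf_root root_step.condEq by blast
next
  case (sR x y z)
  have nx: "normal_form x" "normal_form y" using sR.prems(1) nf_app by blast+
  have "size x + size y < size (CC \<cdot> z \<cdot> x \<cdot> y)" by simp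
  then have "x = y" using sR.prems(2) nx sR.hyps(1) by blast
  then show ?case using sR.prems(1) nf_root root_step.condEq by blast
next
  case (sK x y) then show ?case using nf_root root_step.ruleK by blast
next
  case (sS x y z) then show ?case using nf_root root_step.ruleS by blast
qed

lemma nf_snf:
  fixes t :: "'v trm"
  assumes "sstep t u" "normal_form t"
    "\<forall>x y :: 'v trm. size x + size y < size t \<longrightarrow> normal_form x \<longrightarrow> normal_form y \<longrightarrow> conv x y \<longrightarrow> x = y"
  shows False
  using assms
proof (induction rule: sstep.induct)
  case (sroot s t)
  then show ?case using sroot_nf by blast
next
  case (sappL s t u)
  have "normal_form s" using sappL.prems(1) nf_app by blast
  moreover have "\<forall>x y :: 'v trm. size x + size y < size s \<longrightarrow> normal_form x \<longrightarrow> normal_form y \<longrightarrow> conv x y \<longrightarrow> x = y"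
    using sappL.prems(2) by simp
  ultimately show ?case using sappL.IH by blast
next
  case (sappR s t u)
  have "normal_form s" using sappR.prems(1) nf_app by blast
  moreover have "\<forall>x y :: 'v trm. size x + size y < size s \<longrightarrow> normal_form x \<longrightarrow> normal_form y \<longrightarrow> conv x y \<longrightarrow> x = y"
    using sappR.prems(2) by simp
  ultimately show ?case using sappR.IH by blast
qed

lemma snf_star: "sstep\<^sup>*\<^sup>* t u \<Longrightarrow> (\<And>v. \<not> sstep t v) \<Longrightarrow> u = t"
  by (induction rule: converse_rtranclp_induct) auto

lemma UN_gen:
  fixes t1 t2 :: "'v trm"
  shows "normal_form t1 \<Longrightarrow> normal_form t2 \<Longrightarrow> conv t1 t2 \<Longrightarrow> t1 = t2"
proof (induction "size t1 + size t2" arbitrary: t1 t2 rule: less_induct)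
  case less
  have IH: "\<forall>x y :: 'v trm. size x + size y < size t1 + size t2 \<longrightarrow> normal_form x \<longrightarrow> normal_form y \<longrightarrow> conv x y \<longrightarrow> x = y"
    using less.hyps by blast
  have n1: "\<And>v. \<not> sstep t1 v"
  proof
    fix v assume "sstep t1 v"
    then show False using nf_snf less.prems(1) IH by fastforce
  qed
  have n2: "\<And>v. \<not> sstep t2 v"
  proof
    fix v assume "sstep t2 v"
    then show False using nf_snf less.prems(2) IH by fastforce
  qed
  from conv_join[OF less.prems(3)] obtain c where "sstep\<^sup>*\<^sup>* t1 c" "sstep\<^sup>*\<^sup>* t2 c" by blast
  then show ?case using snf_star n1 n2 by metis
qed


theorem mainTheorem7:
  fixes t1 t2 :: "nat trm"
  assumes "normal_form t1" and "normal_form t2" and "conv t1 t2"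
  shows "t1 = t2"
  using UN_gen assms by blast

end
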